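(* Assume $\xi_v\ge0$ for all $v$, $\pi_v>0$ for all $v\in\mathcal V$, and that the numbers $\{M_i\xi_i\}_{i\in\mathcal V}$ are not all equal. Then for all $\alpha,c\in\mathbb R$, the point $$\boldsymbol\alpha^\star=\alpha\mathbf 1,\qquad \boldsymbol\beta^\star=c\,\mathbf 1-e^{-\alpha}\,\boldsymbol M\circ\boldsymbol\xi$$ is a stationary point of the gradient flow $(\dot{\boldsymbol\alpha},\dot{\boldsymbol\beta})=-\nabla_{\boldsymbol\alpha,\boldsymbol\beta}\mathrm{loss}(\boldsymbol\alpha,\boldsymbol\beta)$, and every such point is a global minimizer of $\mathrm{loss}$.
   Context: Let $\mathcal V=\{1,\dots,V\}$ with trigger set $\mathcal T\subseteq\mathcal V$; $\mathbf P=(p_{vk})$ row-stochastic; weights $\pi_v$ and $\tilde\pi_v=\pi_v\mathbf 1\{v\notin\mathcal T\}$. Fix nonnegative integers $M_k$ with $M=\sum_kM_k>0$, reals $\xi_k\ge0$, and write $\boldsymbol M=(M_1,\dots,M_V)$, $\boldsymbol\xi=(\xi_1,\dots,\xi_V)$, $\circ$ for the entrywise product, $\mathbf 1$ for the all-ones vector. For $\boldsymbol\alpha,\boldsymbol\beta\in\mathbb R^V$, $$l_{vi}=\frac{p_{vi}\exp\!\big(\frac{M_i\xi_i+e^{\alpha_v}\beta_i}{e^{\alpha_v}+M}\big)}{\sum_{k} p_{vk}\exp\!\big(\frac{M_k\xi_k+e^{\alpha_v}\beta_k}{e^{\alpha_v}+M}\big)},$$ $\mathrm{loss}_v(\alpha_v,\boldsymbol\beta)=\sum_k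 p_{vk}\log(p_{vk}/l_{vk})$ (with $0\log 0=0$), $\mathrm{loss}(\boldsymbol\alpha,\boldsymbol\beta)=\sum_{v}\tilde\pi_v\mathrm{loss}_v(\alpha_v,\boldsymbol\beta)$. *)

theory Defs
  imports "HOL-Analysis.Analysis"
begin

text \<open>Vertex set \<V> is the finite type 'n; vectors in R^V are real^'n.
  P v k = p_vk, Mv k = M_k (natural numbers), xi k = xi_k.\<close>

definition Mtot :: "('n::finite \<Rightarrow> nat) \<Rightarrow> real" where
  "Mtot Mv = real (\<Sum>k\<in>UNIV. Mv k)"

definition expo :: "('n::finite \<Rightarrow> nat) \<Rightarrow> ('n \<Rightarrow> real) \<Rightarrow> real \<Rightarrow> real^'n \<Rightarrow> 'n \<Rightarrow> real" where
  "expo Mv xi a b i = exp ((real (Mv i) * xi i + exp a * (b $ i)) / (exp a + Mtot Mv))"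

definition lval :: "('n::finite \<Rightarrow> 'n \<Rightarrow> real) \<Rightarrow> ('n \<Rightarrow> nat) \<Rightarrow> ('n \<Rightarrow> real)
    \<Rightarrow> real \<Rightarrow> real^'n \<Rightarrow> 'n \<Rightarrow> 'n \<Rightarrow> real" where
  "lval P Mv xi a b v i =
     P v i * expo Mv xi a b i / (\<Sum>k\<in>UNIV. P v k * expo Mv xi a b k)"

definition loss_v :: "('n::finite \<Rightarrow> 'n \<Rightarrow> real) \<Rightarrow> ('n \<Rightarrow> nat) \<Rightarrow> ('n \<Rightarrow> real)
    \<Rightarrow> 'n \<Rightarrow> real \<Rightarrow> real^'n \<Rightarrow> real" where
  "loss_v P Mv xi v a b =
     (\<Sum>k\<in>UNIV. if P v k = 0 then 0 else P v k * ln (P v k / lval P Mv xi a b v k))"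

definition loss :: "'n set \<Rightarrow> ('n::finite \<Rightarrow> real) \<Rightarrow> ('n \<Rightarrow> 'n \<Rightarrow> real) \<Rightarrow> ('n \<Rightarrow> nat)
    \<Rightarrow> ('n \<Rightarrow> real) \<Rightarrow> real^'n \<Rightarrow> real^'n \<Rightarrow> real" where
  "loss T w P Mv xi al b =
     (\<Sum>v\<in>UNIV. (if v \<in> T then 0 else w v) * loss_v P Mv xi v (al $ v) b)"

end

theory Submission
  imports Defs
begin

definition Ar :: "('n::finite \<Rightarrow> nat) \<Rightarrow> ('n \<Rightarrow> real) \<Rightarrow> real \<Rightarrow> real^'n \<Rightarrow> 'n \<Rightarrow> real" where
  "Ar Mv xi a b k = (real (Mv k) * xi k + exp a * (b $ k)) / (exp a + Mtot Mv)"

lemma expo_Ar: "expo Mv xi a b k = exp (Ar Mv xi a b k)"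
  unfolding expo_def Ar_def by simp

lemma S_pos:
  fixes P :: "'n::finite \<Rightarrow> 'n \<Rightarrow> real"
  assumes "\<And>v k. P v k \<ge> 0" "\<And>v. (\<Sum>k\<in>UNIV. P v k) = 1"
  shows "(\<Sum>k\<in>UNIV. P v k * exp (f k)) > 0"
proof -
  obtain k0 where "P v k0 \<noteq> 0"
    using assms(2)[of v] by (metis (no_types, lifting) sum.neutral zero_neq_one)
  hence "P v k0 * exp (f k0) > 0" using assms(1)[of v k0] by simp
  moreover have "P v k0 * exp (f k0) \<le> (\<Sum>k\<in>UNIV. P v k * exp (f k))"
    by (rule member_le_sum) (use assms(1) in auto)
  ultimately show ?thesis by linarith
qed

lemma loss_v_eq:
  fixes P :: "'n::finite \<Rightarrow> 'n \<Rightarrow> real"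
  assumes Pn: "\<And>v k. P v k \<ge> 0" and Pr: "\<And>v. (\<Sum>k\<in>UNIV. P v k) = 1"
  shows "loss_v P Mv xi v a b = ln (\<Sum>k\<in>UNIV. P v k * exp (Ar Mv xi a b k))
            - (\<Sum>k\<in>UNIV. P v k * Ar Mv xi a b k)"
proof -
  define S where "S = (\<Sum>k\<in>UNIV. P v k * exp (Ar Mv xi a b k))"
  have Sp: "S > 0" unfolding S_def by (rule S_pos[OF Pn Pr])
  have "loss_v P Mv xi v a b = (\<Sum>k\<in>UNIV. P v k * (ln S - Ar Mv xi a b k))"
    unfolding loss_v_def
  proof (rule sum.cong)
    fix k
    show "(if P v k = 0 then 0 else P v k * ln (P v k / lval P Mv xi a b v k)) =
          P v k * (ln S - Ar Mv xi a b k)"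
    proof (cases "P v k = 0")
      case False
      have "P v k / lval P Mv xi a b v k = S / exp (Ar Mv xi a b k)"
        unfolding lval_def expo_Ar S_def[symmetric] using False Sp by (simp add: field_simps)
      then show ?thesis using False Sp by (simp add: ln_div)
    qed simp
  qed simp
  also have "\<dots> = ln S * (\<Sum>k\<in>UNIV. P v k) - (\<Sum>k\<in>UNIV. P v k * Ar Mv xi a b k)"
    by (simp add: algebra_simps sum_subtractf sum_distrib_left sum_distrib_right)
  finally show ?thesis using Pr S_def by simp
qed

lemma lse_ge:
  fixes p x :: "'n::finite \<Rightarrow> real"
  assumes "\<And>k. p k \<ge> 0" "(\<Sum>k\<in>UNIV. p k) = 1"
  shows "(\<Sum>k\<in>UNIV. p k * x k) \<le> ln (\<Sum>k\<in>UNIV. p k * exp (x k))"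
proof -
  define m where "m = (\<Sum>k\<in>UNIV. p k * x k)"
  have "\<And>k. p k * (exp m * (1 + (x k - m))) \<le> p k * exp (x k)"
  proof -
    fix k
    have "exp m * (1 + (x k - m)) \<le> exp m * exp (x k - m)"
      by (rule mult_left_mono) (auto simp: exp_ge_add_one_self)
    also have "\<dots> = exp (x k)" by (simp add: exp_diff)
    finally show "p k * (exp m * (1 + (x k - m))) \<le> p k * exp (x k)"
      by (rule mult_left_mono) (use assms in auto)
  qed
  hence "(\<Sum>k\<in>UNIV. p k * (exp m * (1 + (x k - m)))) \<le> (\<Sum>k\<in>UNIV. p k * exp (x k))"
    by (rule sum_mono)
  moreover have "(\<Sum>k\<in>UNIV. p k * (exp m * (1 + (x k - m)))) =
       exp m * ((\<Sum>k\<in>UNIV. p k) + (\<Sum>k\<in>UNIV. p k * x k) - m * (\<Sum>k\<in>UNIV. p k))"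
    by (simp add: algebra_simps sum.distrib sum_subtractf sum_distrib_left sum_distrib_right)
  ultimately have "exp m \<le> (\<Sum>k\<in>UNIV. p k * exp (x k))"
    using assms(2) m_def by simp
  hence "ln (exp m) \<le> ln (\<Sum>k\<in>UNIV. p k * exp (x k))"
    by (subst ln_le_cancel_iff) (auto intro: less_le_trans[of 0 "exp m"])
  thus ?thesis by (simp add: m_def)
qed

lemma diff_exp: "f differentiable (at x) \<Longrightarrow> (\<lambda>z. exp (f z :: real)) differentiable (at x)"
  unfolding differentiable_def using has_derivative_exp by blast

lemma diff_ln: "f differentiable (at x) \<Longrightarrow> f x > (0::real) \<Longrightarrow> (\<lambda>z. ln (f z)) differentiable (at x)"
  unfolding differentiable_def using has_derivative_ln by blast

lemma diff_comp: "(\<lambda>z::(real^'n) \<times> (real^'n). fst z $ v) differentiable (at x)"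
   "(\<lambda>z::(real^'n) \<times> (real^'n). snd z $ v) differentiable (at x)"
proof -
  have "bounded_linear (\<lambda>z::(real^'n) \<times> (real^'n). fst z $ v)"
    using bounded_linear_compose[OF bounded_linear_vec_nth[of v] bounded_linear_fst] by (simp add: o_def)
  thus "(\<lambda>z::(real^'n) \<times> (real^'n). fst z $ v) differentiable (at x)"
    by (rule bounded_linear_imp_differentiable)
  have "bounded_linear (\<lambda>z::(real^'n) \<times> (real^'n). snd z $ v)"
    using bounded_linear_compose[OF bounded_linear_vec_nth[of v] bounded_linear_snd] by (simp add: o_def)
  thus "(\<lambda>z::(real^'n) \<times> (real^'n). snd z $ v) differentiable (at x)"
    by (rule bounded_linear_imp_differentiable)
qed

theorem theorem2:
  fixes T :: "'n::finite set"
    and w :: "'n \<Rightarrow> real"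
    and P :: "'n \<Rightarrow> 'n \<Rightarrow> real"
    and Mv :: "'n \<Rightarrow> nat"
    and xi :: "'n \<Rightarrow> real"
    and a c :: real
  assumes P_nonneg: "\<And>v k. P v k \<ge> 0"
    and P_rows: "\<And>v. (\<Sum>k\<in>UNIV. P v k) = 1"
    and M_pos: "(\<Sum>k\<in>UNIV. Mv k) > 0"
    and xi_nonneg: "\<And>v. xi v \<ge> 0"
    and pi_pos: "\<And>v. w v > 0"
    and not_all_equal: "\<not> (\<forall>i j. real (Mv i) * xi i = real (Mv j) * xi j)"
  shows "((\<lambda>z. loss T w P Mv xi (fst z) (snd z)) has_derivative (\<lambda>_. 0))
            (at ((\<chi> v. a), (\<chi> i. c - exp (- a) * (real (Mv i) * xi i))))
         \<and> (\<forall>al b. loss T w P Mv xi (\<chi> v. a) (\<chi> i. c - exp (- a) * (real (Mv i) * xi i))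
                    \<le> loss T w P Mv xi al b)"
proof -
  define x0 where "x0 = ((\<chi> v. a) :: real^'n, (\<chi> i. c - exp (- a) * (real (Mv i) * xi i)) :: real^'n)"
  define f where "f = (\<lambda>z. loss T w P Mv xi (fst z) (snd z))"
  have Mt: "Mtot Mv \<ge> 0" unfolding Mtot_def by (simp add: sum_nonneg)
  have den: "\<And>a. exp a + Mtot Mv > 0" using Mt by (metis add_pos_nonneg exp_gt_zero)
  have nn: "loss T w P Mv xi al b \<ge> 0" for al b
    unfolding loss_def
  proof (rule sum_nonneg)
    fix v
    have "loss_v P Mv xi v (al $ v) b \<ge> 0"
      unfolding loss_v_eq[OF P_nonneg P_rows]
      using lse_ge[OF P_nonneg P_rows, of v] by simp
    moreover have "(if v \<in> T then 0 else w v) \<ge> 0" using pi_pos[of v] by simp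
    ultimately show "(if v \<in> T then 0 else w v) * loss_v P Mv xi v (al $ v) b \<ge> 0"
      by (rule mult_nonneg_nonneg[rotated])
  qed
  define K where "K = exp a * c / (exp a + Mtot Mv)"
  have AK: "\<And>k. Ar Mv xi a (snd x0) k = K"
    unfolding Ar_def K_def x0_def by (simp add: algebra_simps exp_minus)
  have z0: "loss T w P Mv xi (fst x0) (snd x0) = 0"
    unfolding loss_def
  proof (rule sum.neutral, intro ballI)
    fix v
    have "loss_v P Mv xi v a (snd x0) = ln (exp K * (\<Sum>k\<in>UNIV. P v k)) - K * (\<Sum>k\<in>UNIV. P v k)"
      unfolding loss_v_eq[OF P_nonneg P_rows] AK
      by (simp add: sum_distrib_left sum_distrib_right mult.commute)
    also have "\<dots> = 0" using P_rows by simp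
    finally show "(if v \<in> T then 0 else w v) * loss_v P Mv xi v (fst x0 $ v) (snd x0) = 0"
      by (simp add: x0_def)
  qed
  have minpt: "\<forall>al b. loss T w P Mv xi (fst x0) (snd x0) \<le> loss T w P Mv xi al b"
    using nn z0 by simp
  have feq: "f = (\<lambda>z. \<Sum>v\<in>UNIV. (if v \<in> T then 0 else w v) *
      (ln (\<Sum>k\<in>UNIV. P v k * exp ((real (Mv k) * xi k + exp (fst z $ v) * (snd z $ k)) / (exp (fst z $ v) + Mtot Mv)))
       - (\<Sum>k\<in>UNIV. P v k * ((real (Mv k) * xi k + exp (fst z $ v) * (snd z $ k)) / (exp (fst z $ v) + Mtot Mv)))))"
    unfolding f_def loss_def loss_v_eq[OF P_nonneg P_rows] Ar_def by simp
  have hv: "(\<lambda>z. ln (\<Sum>k\<in>UNIV. P v k * exp ((real (Mv k) * xi k + exp (fst z $ v) * (snd z $ k)) / (exp (fst z $ v) + Mtot Mv)))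
       - (\<Sum>k\<in>UNIV. P v k * ((real (Mv k) * xi k + exp (fst z $ v) * (snd z $ k)) / (exp (fst z $ v) + Mtot Mv)))) differentiable (at x0)" for v
    apply (intro differentiable_sum differentiable_mult differentiable_const differentiable_diff
        diff_ln diff_exp differentiable_divide differentiable_add diff_comp S_pos[OF P_nonneg P_rows] ballI finite_UNIV)
    using den by (auto simp: less_imp_neq[symmetric])
  have "f differentiable (at x0)"
    unfolding feq
    by (intro differentiable_sum differentiable_mult differentiable_const hv ballI) auto
  then obtain D where D: "(f has_derivative D) (at x0)" unfolding differentiable_def by blast
  have "D = (\<lambda>v. 0)"
    by (rule differential_zero_maxmin[of x0 UNIV f D]) (use D minpt f_def in auto)
  with D minpt show ?thesis unfolding f_def x0_def by simp
qed

end
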